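(* Let $S\subseteq\mathbb{R}^n$ be a differential subspace and $x\in S$. Let $R(S)=\{f|_S\colon f\in C^\infty(\mathbb{R}^n)\}$. Then every derivation of $R(S)$ at $x$ extends to a unique derivation of $C^\infty(S)$ at $x$.
   Context: For $S\subseteq\mathbb{R}^n$, $C^\infty(S)$ consists of functions $f\colon S\to\mathbb{R}$ such that for each $x\in S$ there is a neighbourhood $U$ of $x$ in $\mathbb{R}^n$ and $f_x\in C^\infty(\mathbb{R}^n)$ with $f|_{U\cap S}=f_x|_{U\cap S}$; $R(S)\subseteq C^\infty(S)$. For a ring $A$ of real functions on $S$ (here $A=R(S)$ or $C^\infty(S)$), a derivation of $A$ at $x$ is a linear map $u\colon A\to\mathbb{R}$ satisfying $u(fh)=u(f)h(x)+f(x)u(h)$ for all $f,h\in A$. *)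

theory Defs
  imports "HOL-Analysis.Analysis"
begin

fun Ck :: "nat \<Rightarrow> ('a::euclidean_space \<Rightarrow> real) \<Rightarrow> bool" where
  "Ck 0 f = continuous_on UNIV f"
| "Ck (Suc k) f = ((\<forall>x. f differentiable (at x)) \<and>
                    (\<forall>v. Ck k (\<lambda>x. frechet_derivative f (at x) v)))"

definition smooth :: "('a::euclidean_space \<Rightarrow> real) \<Rightarrow> bool" where
  "smooth f = (\<forall>k. Ck k f)"

text \<open>Real functions on S are represented as functions on the whole space that
  vanish outside S (so the representation is canonical and closed under the
  ring operations).\<close>

definition RS :: "'a::euclidean_space set \<Rightarrow> ('a \<Rightarrow> real) set" where
  "RS S = {(\<lambda>y. if y \<in> S then g y else 0) | g. smooth g}"

definition Cinf_on :: "'a::euclidean_space set \<Rightarrow> ('a \<Rightarrow> real) set" where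
  "Cinf_on S = {f. (\<forall>y. y \<notin> S \<longrightarrow> f y = 0) \<and>
     (\<forall>x\<in>S. \<exists>U. open U \<and> x \<in> U \<and>
        (\<exists>g. smooth g \<and> (\<forall>y\<in>U \<inter> S. f y = g y)))}"

definition derivation_at ::
  "('a \<Rightarrow> real) set \<Rightarrow> 'a \<Rightarrow> (('a \<Rightarrow> real) \<Rightarrow> real) \<Rightarrow> bool" where
  "derivation_at A x u =
     ((\<forall>f\<in>A. \<forall>h\<in>A. u (\<lambda>y. f y + h y) = u f + u h) \<and>
      (\<forall>c. \<forall>f\<in>A. u (\<lambda>y. c * f y) = c * u f) \<and>
      (\<forall>f\<in>A. \<forall>h\<in>A. u (\<lambda>y. f y * h y) = u f * h x + f x * u h))"

end

theory Submission
  imports Defs "HOL-Computational_Algebra.Polynomial"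
begin

lemma Ck_Suc_imp: "Ck (Suc k) f \<Longrightarrow> Ck k f"
proof (induction k arbitrary: f)
  case 0
  then show ?case
    by (auto intro!: continuous_at_imp_continuous_on differentiable_imp_continuous_within)
next
  case (Suc k)
  then show ?case by simp
qed

lemma fd_eq: "(f has_derivative f') (at y) \<Longrightarrow> frechet_derivative f (at y) v = f' v"
  by (metis frechet_derivative_at)

lemma Ck_add: "Ck k f \<Longrightarrow> Ck k g \<Longrightarrow> Ck k (\<lambda>y. f y + g y)"
proof (induction k arbitrary: f g)
  case 0
  then show ?case by (auto intro: continuous_on_add)
next
  case (Suc k)
  have d: "\<And>y. f differentiable (at y)" "\<And>y. g differentiable (at y)" using Suc.prems by auto
  have e: "(\<lambda>y. frechet_derivative (\<lambda>y. f y + g y) (at y) v)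
      = (\<lambda>y. frechet_derivative f (at y) v + frechet_derivative g (at y) v)" for v
  proof
    fix y
    show "frechet_derivative (\<lambda>y. f y + g y) (at y) v = frechet_derivative f (at y) v + frechet_derivative g (at y) v"
      apply (rule fd_eq)
      using has_derivative_add[OF frechet_derivative_works[THEN iffD1, OF d(1)] frechet_derivative_works[THEN iffD1, OF d(2)]]
      by simp
  qed
  show ?case using Suc d by (auto simp: e intro: differentiable_add)
qed

lemma Ck_mult: "Ck k f \<Longrightarrow> Ck k g \<Longrightarrow> Ck k (\<lambda>y. f y * g y)"
proof (induction k arbitrary: f g)
  case 0
  then show ?case by (auto intro: continuous_on_mult)
next
  case (Suc k)
  have d: "\<And>y. f differentiable (at y)" "\<And>y. g differentiable (at y)" using Suc.prems by auto
  have e: "(\<lambda>y. frechet_derivative (\<lambda>y. f y * g y) (at y) v)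
      = (\<lambda>y. f y * frechet_derivative g (at y) v + frechet_derivative f (at y) v * g y)" for v
  proof
    fix y
    show "frechet_derivative (\<lambda>y. f y * g y) (at y) v = f y * frechet_derivative g (at y) v + frechet_derivative f (at y) v * g y"
      apply (rule fd_eq)
      using has_derivative_mult[OF frechet_derivative_works[THEN iffD1, OF d(1)] frechet_derivative_works[THEN iffD1, OF d(2)]]
      by simp
  qed
  have "Ck k f" "Ck k g" using Suc.prems Ck_Suc_imp by blast+
  then show ?case using Suc d by (auto simp: e intro!: differentiable_mult Ck_add)
qed

lemma Ck_const: "Ck k (\<lambda>y. c)"
  by (induction k arbitrary: c) auto

lemma Ck_affine: "Ck k (\<lambda>y. inner y a + c)"
proof (cases k)
  case 0
  then show ?thesis by (auto intro!: continuous_intros)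
next
  case (Suc m)
  have h: "((\<lambda>y. inner y a + c) has_derivative (\<lambda>v. inner v a)) (at y)" for y
    by (auto intro!: derivative_eq_intros)
  have e: "(\<lambda>y. frechet_derivative (\<lambda>y. inner y a + c) (at y) v) = (\<lambda>y. inner v a)" for v
    using fd_eq[OF h] by auto
  show ?thesis using h Suc by (auto simp: e Ck_const differentiable_def)
qed

lemma Ck_q: "Ck k (\<lambda>y. c - inner (y - x) (y - x))"
proof (cases k)
  case 0
  then show ?thesis by (auto intro!: continuous_intros)
next
  case (Suc m)
  have h: "((\<lambda>y. c - inner (y - x) (y - x)) has_derivative (\<lambda>v. - (inner (y - x) v + inner v (y - x)))) (at y)" for y
    by (auto intro!: derivative_eq_intros)
  have e: "(\<lambda>y. frechet_derivative (\<lambda>y. c - inner (y - x) (y - x)) (at y) v) = (\<lambda>y. inner y (-2 *\<^sub>R v) + 2 * inner x v)" for v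
    using fd_eq[OF h] by (auto simp: inner_diff_left inner_diff_right inner_commute)
  show ?thesis unfolding Suc Ck.simps e using h Ck_affine differentiable_def by blast
qed

lemma Ck_chain:
  "(\<forall>n t. (D n has_real_derivative D (Suc n) t) (at t)) \<Longrightarrow> Ck k q \<Longrightarrow> Ck k (\<lambda>y. D 0 (q y))"
proof (induction k arbitrary: D q)
  case 0
  have "continuous_on UNIV (D 0)"
    using 0 by (meson DERIV_isCont continuous_at_imp_continuous_on)
  then show ?case using 0
    by (auto intro: continuous_on_compose2[of UNIV "D 0" UNIV q])
next
  case (Suc k)
  have d: "\<And>y. q differentiable (at y)" using Suc.prems by auto
  have hd: "((\<lambda>y. D 0 (q y)) has_derivative (\<lambda>v. D 1 (q y) * frechet_derivative q (at y) v)) (at y)" for y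
    using has_derivative_compose[OF frechet_derivative_works[THEN iffD1, OF d] 
        has_field_derivative_imp_has_derivative[OF Suc.prems(1)[rule_format, of 0 "q y"]]]
    by simp
  have e: "(\<lambda>y. frechet_derivative (\<lambda>y. D 0 (q y)) (at y) v) = (\<lambda>y. D 1 (q y) * frechet_derivative q (at y) v)" for v
    using fd_eq[OF hd] by auto
  have c1: "Ck k (\<lambda>y. D 1 (q y))"
    using Suc.IH[of "\<lambda>n. D (Suc n)" q] Suc.prems Ck_Suc_imp by auto
  show ?case using hd c1 Suc.prems by (auto simp: e differentiable_def intro!: Ck_mult)
qed

lemma poly_exp_lim: "((\<lambda>s. poly p s * exp (-s)) \<longlongrightarrow> (0::real)) at_top"
proof -
  have "((\<lambda>s. \<Sum>i\<le>degree p. coeff p i * (s ^ i / exp s)) \<longlongrightarrow> 0) at_top"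
    by (intro tendsto_null_sum tendsto_mult_right_zero tendsto_power_div_exp_0)
  moreover have "(\<lambda>s. \<Sum>i\<le>degree p. coeff p i * (s ^ i / exp s)) = (\<lambda>s. poly p s * exp (-s))"
    by (auto simp: poly_altdef sum_distrib_right sum_divide_distrib exp_minus field_simps)
  ultimately show ?thesis by simp
qed

fun P :: "nat \<Rightarrow> real poly" where
  "P 0 = 1"
| "P (Suc n) = [:0,0,1:] * (P n - pderiv (P n))"

definition Dh :: "nat \<Rightarrow> real \<Rightarrow> real" where
  "Dh n t = (if 0 < t then poly (P n) (inverse t) * exp (- inverse t) else 0)"

lemma Dh_pos: "(Dh n has_real_derivative Dh (Suc n) t) (at t)" if "t > 0"
proof -
  have "((\<lambda>t. poly (P n) (inverse t) * exp (- inverse t)) has_real_derivative Dh (Suc n) t) (at t)"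
    using that
    by (auto intro!: derivative_eq_intros DERIV_chain2[OF poly_DERIV] simp: Dh_def field_simps power2_eq_square)
  then show ?thesis
    by (rule has_field_derivative_transform_within_open[where S="{0<..}"]) (use that in \<open>auto simp: Dh_def\<close>)
qed

lemma Dh_neg: "(Dh n has_real_derivative Dh (Suc n) t) (at t)" if "t < 0"
proof -
  have "((\<lambda>t. 0) has_real_derivative 0) (at t)" by simp
  then have "(Dh n has_real_derivative 0) (at t)"
    by (rule has_field_derivative_transform_within_open[where S="{..<0}"]) (use that in \<open>auto simp: Dh_def\<close>)
  then show ?thesis using that by (simp add: Dh_def)
qed

lemma Dh_zero: "(Dh n has_real_derivative Dh (Suc n) 0) (at 0)"
proof -
  have "((\<lambda>y. (Dh n y - Dh n 0) / (y - 0)) \<longlongrightarrow> 0) (at (0::real))"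
  proof (rule filterlim_split_at)
    show "((\<lambda>y. (Dh n y - Dh n 0) / (y - 0)) \<longlongrightarrow> 0) (at_left (0::real))"
    proof (rule tendsto_eventually)
      show "\<forall>\<^sub>F y in at_left (0::real). (Dh n y - Dh n 0) / (y - 0) = 0"
        by (auto simp: eventually_at_left_field Dh_def intro!: exI[of _ "-1"])
    qed
    have "((\<lambda>s. poly ([:0,1:] * P n) s * exp (-s)) \<longlongrightarrow> (0::real)) at_top"
      by (rule poly_exp_lim)
    then have "((\<lambda>s. (Dh n (inverse s) - Dh n 0) / (inverse s - 0)) \<longlongrightarrow> (0::real)) at_top"
    proof (rule Lim_transform_eventually)
      show "\<forall>\<^sub>F s in at_top. poly ([:0,1:] * P n) s * exp (-s) = (Dh n (inverse s) - Dh n 0) / (inverse s - 0)"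
        using eventually_gt_at_top[of "0::real"]
        by eventually_elim (auto simp: Dh_def field_simps)
    qed
    then show "((\<lambda>y. (Dh n y - Dh n 0) / (y - 0)) \<longlongrightarrow> 0) (at_right (0::real))"
      by (simp add: filterlim_at_right_to_top)
  qed
  then show ?thesis by (simp add: has_field_derivative_iff Dh_def)
qed

lemma Dh_deriv: "(Dh n has_real_derivative Dh (Suc n) t) (at t)"
  using Dh_pos Dh_neg Dh_zero by (cases "t < 0"; cases "t = 0") auto

lemma Dh0_pos: "t > 0 \<Longrightarrow> Dh 0 t > 0" by (simp add: Dh_def)
lemma Dh0_nonpos: "t \<le> 0 \<Longrightarrow> Dh 0 t = 0" by (simp add: Dh_def)

lemma bump:
  fixes x :: "'a::euclidean_space"
  assumes "r > 0"
  obtains phi where "smooth phi" "phi x > 0" "\<And>y. dist y x \<ge> r \<Longrightarrow> phi y = 0"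
proof
  let ?phi = "\<lambda>y. Dh 0 (r^2 - inner (y - x) (y - x))"
  show "smooth ?phi" unfolding smooth_def
    using Ck_chain[of Dh, OF _ Ck_q] Dh_deriv by blast
  show "?phi x > 0" using assms by (simp add: Dh0_pos)
  fix y assume "dist y x \<ge> r"
  then have "r^2 \<le> (norm (y - x))^2" using assms by (simp add: dist_norm power_mono)
  then show "?phi y = 0" by (simp add: Dh0_nonpos power2_norm_eq_inner)
qed

lemma smooth_add: "smooth f \<Longrightarrow> smooth g \<Longrightarrow> smooth (\<lambda>y. f y + g y)"
  by (simp add: smooth_def Ck_add)
lemma smooth_mult: "smooth f \<Longrightarrow> smooth g \<Longrightarrow> smooth (\<lambda>y. f y * g y)"
  by (simp add: smooth_def Ck_mult)
lemma smooth_const: "smooth (\<lambda>y. c)"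
  by (simp add: smooth_def Ck_const)
lemma smooth_cmult: "smooth g \<Longrightarrow> smooth (\<lambda>y. c * g y)"
  using smooth_mult[OF smooth_const] by blast

lemma zero_in_RS: "(\<lambda>y. 0) \<in> RS S"
  unfolding RS_def using smooth_const[of 0] by force

lemma R_in_RS: "smooth g \<Longrightarrow> (\<lambda>y. if y \<in> S then g y else 0) \<in> RS S"
  unfolding RS_def by blast

lemma RS_sub: "RS S \<subseteq> Cinf_on S"
proof
  fix f assume "f \<in> RS S"
  then obtain g where g: "smooth g" "f = (\<lambda>y. if y \<in> S then g y else 0)" unfolding RS_def by blast
  show "f \<in> Cinf_on S" unfolding Cinf_on_def using g by (auto intro!: exI[of _ UNIV] exI[of _ g])
qed

lemma der_add: "derivation_at A x v \<Longrightarrow> f \<in> A \<Longrightarrow> h \<in> A \<Longrightarrow> v (\<lambda>y. f y + h y) = v f + v h"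
  unfolding derivation_at_def by (drule conjunct1) (drule bspec, assumption, drule bspec, assumption, assumption)
lemma der_smul: "derivation_at A x v \<Longrightarrow> f \<in> A \<Longrightarrow> v (\<lambda>y. c * f y) = c * v f"
  unfolding derivation_at_def by (drule conjunct2, drule conjunct1) (drule spec[of _ c], drule bspec, assumption, assumption)
lemma der_mult: "derivation_at A x v \<Longrightarrow> f \<in> A \<Longrightarrow> h \<in> A \<Longrightarrow> v (\<lambda>y. f y * h y) = v f * h x + f x * v h"
  unfolding derivation_at_def by (drule conjunct2, drule conjunct2) (drule bspec, assumption, drule bspec, assumption, assumption)

lemma deriv_zero: "derivation_at A x v \<Longrightarrow> (\<lambda>y. 0) \<in> A \<Longrightarrow> v (\<lambda>y. 0) = 0"
proof -
  assume d: "derivation_at A x v" and z: "(\<lambda>y. 0) \<in> A"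
  have "v (\<lambda>y. 0 * (\<lambda>y. 0) y) = 0 * v (\<lambda>y. 0)" using der_smul[OF d z] .
  then show ?thesis by simp
qed

lemma local_gen:
  fixes x :: "'a::euclidean_space"
  assumes der: "derivation_at A x v" and xS: "x \<in> S" and sub: "RS S \<subseteq> A" and F: "F \<in> A"
    and U: "open U" "x \<in> U" and out: "\<forall>y. y \<notin> S \<longrightarrow> F y = 0" and inn: "\<forall>y\<in>U \<inter> S. F y = 0"
  shows "v F = 0"
proof -
  obtain r where r: "r > 0" "ball x r \<subseteq> U" using U open_contains_ball by blast
  obtain phi where phi: "smooth phi" "phi x > 0" "\<And>y. dist y x \<ge> r \<Longrightarrow> phi y = 0"
    using bump[OF r(1)] by blast
  let ?P = "\<lambda>y. if y \<in> S then phi y else 0"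
  have P: "?P \<in> A" using sub R_in_RS[OF phi(1)] by blast
  have z: "(\<lambda>y. 0) \<in> A" using sub zero_in_RS by blast
  have prod: "(\<lambda>y. ?P y * F y) = (\<lambda>y. 0)"
  proof
    fix y
    show "?P y * F y = 0"
    proof (cases "y \<in> S \<and> dist y x < r")
      case True
      then have "y \<in> U" using r by (auto simp: dist_commute)
      then show ?thesis using inn True by auto
    next
      case False
      then show ?thesis using phi(3) by auto
    qed
  qed
  have Fx: "F x = 0" using inn U xS by auto
  have "v (\<lambda>y. ?P y * F y) = v ?P * F x + ?P x * v F"
    using der_mult[OF der P F] .
  then have "0 = phi x * v F" using prod deriv_zero[OF der z] Fx xS by simp
  then show ?thesis using phi(2) by simp
qed

definition isrep :: "'a::euclidean_space set \<Rightarrow> 'a \<Rightarrow> ('a \<Rightarrow> real) \<Rightarrow> ('a \<Rightarrow> real) \<Rightarrow> bool" where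
  "isrep S x f g = (smooth g \<and> (\<exists>U. open U \<and> x \<in> U \<and> (\<forall>y\<in>U \<inter> S. f y = g y)))"

definition Rs :: "'a set \<Rightarrow> ('a \<Rightarrow> real) \<Rightarrow> ('a \<Rightarrow> real)" where
  "Rs S g = (\<lambda>y. if y \<in> S then g y else 0)"

definition ext :: "'a::euclidean_space set \<Rightarrow> 'a \<Rightarrow> (('a \<Rightarrow> real) \<Rightarrow> real) \<Rightarrow> ('a \<Rightarrow> real) \<Rightarrow> real" where
  "ext S x u f = u (Rs S (SOME g. isrep S x f g))"

lemma Rs_in: "smooth g \<Longrightarrow> Rs S g \<in> RS S"
  unfolding Rs_def by (rule R_in_RS)


lemma u_rep_eq:
  assumes xS: "x \<in> S" and der: "derivation_at (RS S) x u"
    and r1: "isrep S x f g1" and r2: "isrep S x f g2"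
  shows "u (Rs S g1) = u (Rs S g2)"
proof -
  obtain U1 where U1: "open U1" "x \<in> U1" "\<forall>y\<in>U1 \<inter> S. f y = g1 y" "smooth g1" using r1 unfolding isrep_def by blast
  obtain U2 where U2: "open U2" "x \<in> U2" "\<forall>y\<in>U2 \<inter> S. f y = g2 y" "smooth g2" using r2 unfolding isrep_def by blast
  let ?d = "\<lambda>y. g1 y + (-1) * g2 y"
  have sd: "smooth ?d" using U1 U2 by (intro smooth_add smooth_cmult)
  have eq: "Rs S g1 = (\<lambda>y. Rs S g2 y + Rs S ?d y)" by (auto simp: Rs_def)
  have "u (Rs S ?d) = 0"
    apply (rule local_gen[OF der xS subset_refl Rs_in[OF sd], where U="U1 \<inter> U2"])
    using U1 U2 by (force simp: Rs_def)+
  then show ?thesis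
    using eq der_add[OF der Rs_in[OF U2(4)] Rs_in[OF sd]] by simp
qed


lemma ext_eq:
  assumes xS: "x \<in> S" and der: "derivation_at (RS S) x u" and r: "isrep S x f g"
  shows "ext S x u f = u (Rs S g)"
  unfolding ext_def by (rule u_rep_eq[OF xS der someI[of "isrep S x f", OF r] r])

lemma Cinf_rep: "f \<in> Cinf_on S \<Longrightarrow> x \<in> S \<Longrightarrow> \<exists>g. isrep S x f g"
  unfolding Cinf_on_def isrep_def by blast


theorem mainTheorem3:
  fixes S :: "'a::euclidean_space set" and x :: 'a
    and u :: "('a \<Rightarrow> real) \<Rightarrow> real"
  assumes "x \<in> S"
    and "derivation_at (RS S) x u"
  shows "\<exists>w. derivation_at (Cinf_on S) x w \<and> (\<forall>f\<in>RS S. w f = u f) \<and>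
           (\<forall>w'. derivation_at (Cinf_on S) x w' \<and> (\<forall>f\<in>RS S. w' f = u f)
                 \<longrightarrow> (\<forall>f\<in>Cinf_on S. w' f = w f))"
proof (intro exI conjI allI impI ballI)
  note xS = assms(1) and der = assms(2)
  let ?w = "ext S x u"
  show "?w f = u f" if fR: "f \<in> RS S" for f
  proof -
    obtain g where g: "smooth g" "f = Rs S g" using fR unfolding RS_def Rs_def by blast
    have "isrep S x f g" unfolding isrep_def using g by (auto simp: Rs_def intro!: exI[of _ UNIV])
    then show ?thesis using ext_eq[OF xS der] g by simp
  qed
  show "derivation_at (Cinf_on S) x ?w"
    unfolding derivation_at_def
  proof (intro conjI ballI allI)
    fix f h assume f: "f \<in> Cinf_on S" and h: "h \<in> Cinf_on S"
    obtain g1 U1 where U1: "open U1" "x \<in> U1" "\<forall>y\<in>U1 \<inter> S. f y = g1 y" "smooth g1"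
      using Cinf_rep[OF f xS] unfolding isrep_def by blast
    obtain g2 U2 where U2: "open U2" "x \<in> U2" "\<forall>y\<in>U2 \<inter> S. h y = g2 y" "smooth g2"
      using Cinf_rep[OF h xS] unfolding isrep_def by blast
    have r1: "isrep S x f g1" "isrep S x h g2" using U1 U2 unfolding isrep_def by blast+
    have r3: "isrep S x (\<lambda>y. f y + h y) (\<lambda>y. g1 y + g2 y)"
      unfolding isrep_def using U1 U2 by (intro conjI smooth_add exI[of _ "U1 \<inter> U2"]) auto
    have r4: "isrep S x (\<lambda>y. f y * h y) (\<lambda>y. g1 y * g2 y)"
      unfolding isrep_def using U1 U2 by (intro conjI smooth_mult exI[of _ "U1 \<inter> U2"]) auto
    have e3: "Rs S (\<lambda>y. g1 y + g2 y) = (\<lambda>y. Rs S g1 y + Rs S g2 y)" by (auto simp: Rs_def)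
    have e4: "Rs S (\<lambda>y. g1 y * g2 y) = (\<lambda>y. Rs S g1 y * Rs S g2 y)" by (auto simp: Rs_def)
    show "?w (\<lambda>y. f y + h y) = ?w f + ?w h"
      using ext_eq[OF xS der r3] ext_eq[OF xS der r1(1)] ext_eq[OF xS der r1(2)]
        der_add[OF der Rs_in[OF U1(4)] Rs_in[OF U2(4)]] e3 by simp
    have fx: "f x = g1 x" "h x = g2 x" using U1 U2 xS by auto
    show "?w (\<lambda>y. f y * h y) = ?w f * h x + f x * ?w h"
      using ext_eq[OF xS der r4] ext_eq[OF xS der r1(1)] ext_eq[OF xS der r1(2)]
        der_mult[OF der Rs_in[OF U1(4)] Rs_in[OF U2(4)]] e4 fx xS by (simp add: Rs_def)
  next
    fix c f assume f: "f \<in> Cinf_on S"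
    obtain g1 U1 where U1: "open U1" "x \<in> U1" "\<forall>y\<in>U1 \<inter> S. f y = g1 y" "smooth g1"
      using Cinf_rep[OF f xS] unfolding isrep_def by blast
    have r1: "isrep S x f g1" using U1 unfolding isrep_def by blast
    have r3: "isrep S x (\<lambda>y. c * f y) (\<lambda>y. c * g1 y)"
      unfolding isrep_def using U1 by (intro conjI smooth_cmult exI[of _ U1]) auto
    have e3: "Rs S (\<lambda>y. c * g1 y) = (\<lambda>y. c * Rs S g1 y)" by (auto simp: Rs_def)
    show "?w (\<lambda>y. c * f y) = c * ?w f"
      using ext_eq[OF xS der r3] ext_eq[OF xS der r1] der_smul[OF der Rs_in[OF U1(4)]] e3 by simp
  qed
  fix w' f assume w': "derivation_at (Cinf_on S) x w' \<and> (\<forall>f\<in>RS S. w' f = u f)" and f: "f \<in> Cinf_on S"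
  obtain g1 U1 where U1: "open U1" "x \<in> U1" "\<forall>y\<in>U1 \<inter> S. f y = g1 y" "smooth g1"
    using Cinf_rep[OF f xS] unfolding isrep_def by blast
  have r1: "isrep S x f g1" using U1 unfolding isrep_def by blast
  have fz: "\<forall>y. y \<notin> S \<longrightarrow> f y = 0" using f unfolding Cinf_on_def by blast
  let ?F = "\<lambda>y. f y + (-1) * Rs S g1 y"
  have RC: "Rs S g1 \<in> Cinf_on S" using RS_sub Rs_in[OF U1(4)] by blast
  have sm: "(\<lambda>y. (-1) * Rs S g1 y) \<in> Cinf_on S"
  proof -
    have e: "Rs S (\<lambda>y. (-1) * g1 y) = (\<lambda>y. (-1) * Rs S g1 y)" by (auto simp: Rs_def)
    have m: "Rs S (\<lambda>y. (-1) * g1 y) \<in> Cinf_on S" using RS_sub Rs_in[OF smooth_cmult[OF U1(4)]] by blast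
    show ?thesis using m unfolding e .
  qed
  have FC: "?F \<in> Cinf_on S"
  proof -
    have "?F \<in> Cinf_on S \<longleftrightarrow> True"
    proof -
      have "\<forall>y. y \<notin> S \<longrightarrow> ?F y = 0" using fz by (simp add: Rs_def)
      moreover have "\<forall>z\<in>S. \<exists>U. open U \<and> z \<in> U \<and> (\<exists>g. smooth g \<and> (\<forall>y\<in>U \<inter> S. ?F y = g y))"
      proof
        fix z assume z: "z \<in> S"
        obtain Uz gz where Uz: "open Uz" "z \<in> Uz" "smooth gz" "\<forall>y\<in>Uz \<inter> S. f y = gz y"
          using f z unfolding Cinf_on_def by blast
        show "\<exists>U. open U \<and> z \<in> U \<and> (\<exists>g. smooth g \<and> (\<forall>y\<in>U \<inter> S. ?F y = g y))"
          using Uz by (intro exI[of _ Uz] conjI exI[of _ "\<lambda>y. gz y + (-1) * g1 y"] smooth_add smooth_cmult U1(4))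
            (auto simp: Rs_def)
      qed
      ultimately show ?thesis unfolding Cinf_on_def by blast
    qed
    then show ?thesis by simp
  qed
  have "w' ?F = 0"
    by (rule local_gen[OF conjunct1[OF w'] xS RS_sub FC U1(1,2)]) (use fz U1 in \<open>auto simp: Rs_def\<close>)
  moreover have "f = (\<lambda>y. ?F y + Rs S g1 y)" by auto
  then have "w' f = w' ?F + w' (Rs S g1)"
    using der_add[OF conjunct1[OF w'] FC RC] by metis
  moreover have "w' (Rs S g1) = u (Rs S g1)" using w' Rs_in[OF U1(4)] by blast
  ultimately show "w' f = ?w f" using ext_eq[OF xS der r1] by simp
qed

end
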